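(* Consider a market with $n$ buyers, $m$ items and $T$ time periods, where item $j$ has per-period supply $s_j^t\ge0$ and overall supply $s_j\ge0$. Every buyer has budget $B_i=1$ and binary valuations $v_{ij}\in\{0,1\}$, and buyer $i$ has per-period demands $d_i^t\ge0$. A feasible allocation is $x=(x_{ij}^t)\ge0$ with $\sum_i x_{ij}^t\le s_j^t$ for all $j,t$ and $\sum_{t,i}x_{ij}^t\le s_j$ for all $j$; let $u_i^t(x_i^t)=\sum_j v_{ij}x_{ij}^t-d_i^t$. Assume there is a feasible allocation with $u_i^t(x_i^t)>0$ for all $i,t$. Then the set of leximin-optimal feasible allocations coincides with the set of maximum Nash welfare allocations, i.e. the optimal solutions of $$\max_{x\ge0}\sum_i\frac1T\sum_t\log\Big(\sum_j v_{ij}x_{ij}^t-d_i^t\Big)\ \text{ over feasible allocations}.$$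
   Context: Leximin order: for vectors $v,\tilde v$ of equal length with nondecreasing rearrangements $v^*,\tilde v^*$, $v$ is leximin-greater than $\tilde v$ if there is $k$ with $v^*_l=\tilde v^*_l$ for $l<k$ and $v^*_k>\tilde v^*_k$. Here a feasible allocation $x$ is leximin-optimal if no feasible $\tilde x$ has the vector $(u_i^t(\tilde x_i^t))_{i,t}$ (indexed by all buyer–period pairs) leximin-greater than $(u_i^t(x_i^t))_{i,t}$. *)

theory Defs
  imports Complex_Main "HOL-Library.Multiset"
begin

definition feasible ::
  "('j \<Rightarrow> 't \<Rightarrow> real) \<Rightarrow> ('j \<Rightarrow> real) \<Rightarrow>
   ('b::finite \<Rightarrow> 'j::finite \<Rightarrow> 't::finite \<Rightarrow> real) \<Rightarrow> bool" where
  "feasible sp s x \<longleftrightarrow>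
     (\<forall>i j t. 0 \<le> x i j t) \<and>
     (\<forall>j t. (\<Sum>i\<in>UNIV. x i j t) \<le> sp j t) \<and>
     (\<forall>j. (\<Sum>t\<in>UNIV. \<Sum>i\<in>UNIV. x i j t) \<le> s j)"

definition util ::
  "('b \<Rightarrow> 'j::finite \<Rightarrow> real) \<Rightarrow> ('b \<Rightarrow> 't \<Rightarrow> real) \<Rightarrow>
   ('b \<Rightarrow> 'j \<Rightarrow> 't \<Rightarrow> real) \<Rightarrow> 'b \<Rightarrow> 't \<Rightarrow> real" where
  "util v d x i t = (\<Sum>j\<in>UNIV. v i j * x i j t) - d i t"

definition sorted_vec :: "('a::finite \<Rightarrow> real) \<Rightarrow> real list" where
  "sorted_vec f = sorted_list_of_multiset (image_mset f (mset_set UNIV))"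

definition leximin_greater :: "('a::finite \<Rightarrow> real) \<Rightarrow> ('a \<Rightarrow> real) \<Rightarrow> bool" where
  "leximin_greater f g \<longleftrightarrow>
     (\<exists>k < length (sorted_vec f).
        (\<forall>l < k. sorted_vec f ! l = sorted_vec g ! l) \<and> sorted_vec f ! k > sorted_vec g ! k)"

definition leximin_optimal ::
  "('b::finite \<Rightarrow> 'j::finite \<Rightarrow> real) \<Rightarrow> ('b \<Rightarrow> 't::finite \<Rightarrow> real) \<Rightarrow>
   ('j \<Rightarrow> 't \<Rightarrow> real) \<Rightarrow> ('j \<Rightarrow> real) \<Rightarrow> ('b \<Rightarrow> 'j \<Rightarrow> 't \<Rightarrow> real) \<Rightarrow> bool" where
  "leximin_optimal v d sp s x \<longleftrightarrow> feasible sp s x \<and>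
     \<not> (\<exists>y. feasible sp s y \<and>
            leximin_greater (\<lambda>(i,t). util v d y i t) (\<lambda>(i,t). util v d x i t))"

text \<open>Nash welfare objective (budgets B_i = 1); only defined (finite) when all utilities
  are positive, otherwise it is -infinity by the usual convention.\<close>
definition nash_welfare ::
  "('b::finite \<Rightarrow> 'j::finite \<Rightarrow> real) \<Rightarrow> ('b \<Rightarrow> 't::finite \<Rightarrow> real) \<Rightarrow>
   ('b \<Rightarrow> 'j \<Rightarrow> 't \<Rightarrow> real) \<Rightarrow> real" where
  "nash_welfare v d x =
     (\<Sum>i\<in>UNIV. (1 / real (card (UNIV :: 't set))) * (\<Sum>t\<in>UNIV. ln (util v d x i t)))"

definition max_nash_welfare ::
  "('b::finite \<Rightarrow> 'j::finite \<Rightarrow> real) \<Rightarrow> ('b \<Rightarrow> 't::finite \<Rightarrow> real) \<Rightarrow>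
   ('j \<Rightarrow> 't \<Rightarrow> real) \<Rightarrow> ('j \<Rightarrow> real) \<Rightarrow> ('b \<Rightarrow> 'j \<Rightarrow> 't \<Rightarrow> real) \<Rightarrow> bool" where
  "max_nash_welfare v d sp s x \<longleftrightarrow>
     feasible sp s x \<and> (\<forall>i t. util v d x i t > 0) \<and>
     (\<forall>y. feasible sp s y \<and> (\<forall>i t. util v d y i t > 0) \<longrightarrow>
          nash_welfare v d y \<le> nash_welfare v d x)"

end

theory Submission
  imports Defs
begin

lemma sv_props:
  fixes f :: "'a::finite \<Rightarrow> real"
  shows "mset (sorted_vec f) = image_mset f (mset_set UNIV)"
    and "sorted (sorted_vec f)"
    and "length (sorted_vec f) = card (UNIV :: 'a set)"
proof -
  show "mset (sorted_vec f) = image_mset f (mset_set UNIV)"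
    unfolding sorted_vec_def by simp
  show "sorted (sorted_vec f)" unfolding sorted_vec_def by simp
  have "length (sorted_vec f) = size (mset (sorted_vec f))" by simp
  also have "\<dots> = card (UNIV :: 'a set)" unfolding sorted_vec_def by simp
  finally show "length (sorted_vec f) = card (UNIV :: 'a set)" .
qed

lemma sorted_split3:
  fixes xs :: "real list"
  shows "sorted xs \<Longrightarrow> xs = filter (\<lambda>v. v < c) xs @ filter (\<lambda>v. v = c) xs @ filter (\<lambda>v. c < v) xs"
proof (induction xs)
  case Nil
  then show ?case by simp
next
  case (Cons a xs)
  then have s: "sorted xs" and ge: "\<forall>y\<in>set xs. a \<le> y" by auto
  note IH = Cons.IH[OF s]
  show ?case
  proof (cases "a < c")
    case True
    then show ?thesis using IH by simp
  next
    case False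
    then have e1: "filter (\<lambda>v. v < c) xs = []" using ge by (auto simp: filter_empty_conv)
    show ?thesis
    proof (cases "a = c")
      case True
      then show ?thesis using IH e1 by simp
    next
      case False
      then have "filter (\<lambda>v. v = c) xs = []" using ge \<open>\<not> a < c\<close> by (auto simp: filter_empty_conv)
      then show ?thesis using IH e1 False \<open>\<not> a < c\<close> by simp
    qed
  qed
qed

lemma filter_eq_rep:
  fixes xs :: "real list"
  shows "filter (\<lambda>v. v = c) xs = replicate (count (mset xs) c) c"
  by (induction xs) auto

lemma count_img:
  fixes f :: "'a::finite \<Rightarrow> real"
  shows "count (image_mset f (mset_set UNIV)) c = card {a. f a = c}"
  by (simp add: count_image_mset vimage_def)

lemma filter_img:
  fixes f :: "'a::finite \<Rightarrow> real"
  shows "filter_mset P (image_mset f (mset_set UNIV)) = image_mset f (mset_set {a. P (f a)})"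
  by (simp add: filter_mset_image_mset)

lemma crit:
  fixes f g :: "'a::finite \<Rightarrow> real"
  assumes h1: "\<forall>a. f a < c \<longleftrightarrow> g a < c"
    and h2: "\<forall>a. g a < c \<longrightarrow> f a = g a"
    and h3: "card {a. f a = c} < card {a. g a = c}"
  shows "leximin_greater f g"
proof -
  define xs where "xs = sorted_vec f"
  define ys where "ys = sorted_vec g"
  have mx: "mset xs = image_mset f (mset_set UNIV)" and sx: "sorted xs"
    and lx: "length xs = card (UNIV :: 'a set)" using sv_props xs_def by auto
  have my: "mset ys = image_mset g (mset_set UNIV)" and sy: "sorted ys"
    and ly: "length ys = card (UNIV :: 'a set)" using sv_props ys_def by auto
  have setsq: "{a. f a < c} = {a. g a < c}" using h1 by auto
  have "mset (filter (\<lambda>v. v < c) xs) = image_mset f (mset_set {a. f a < c})"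
    using mx by (simp add: filter_img)
  also have "\<dots> = image_mset g (mset_set {a. g a < c})"
    unfolding setsq by (rule image_mset_cong) (use h2 in auto)
  also have "\<dots> = mset (filter (\<lambda>v. v < c) ys)"
    using my by (simp add: filter_img)
  finally have meq: "mset (filter (\<lambda>v. v < c) xs) = mset (filter (\<lambda>v. v < c) ys)" .
  have "sort (filter (\<lambda>v. v < c) ys) = filter (\<lambda>v. v < c) xs"
    by (rule properties_for_sort) (use meq sx sorted_wrt_filter in auto)
  moreover have "sort (filter (\<lambda>v. v < c) ys) = filter (\<lambda>v. v < c) ys"
    by (rule properties_for_sort) (use sy sorted_wrt_filter in auto)
  ultimately have Peq: "filter (\<lambda>v. v < c) xs = filter (\<lambda>v. v < c) ys" by simp
  define P where "P = filter (\<lambda>v. v < c) xs"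
  define a where "a = count (mset xs) c"
  define b where "b = count (mset ys) c"
  define Rx where "Rx = filter (\<lambda>v. c < v) xs"
  define Ry where "Ry = filter (\<lambda>v. c < v) ys"
  have ab: "a < b" using h3 mx my count_img a_def b_def by metis
  have xs_eq: "xs = P @ replicate a c @ Rx"
    using sorted_split3[OF sx, of c] filter_eq_rep P_def a_def Rx_def by metis
  have ys_eq: "ys = P @ replicate b c @ Ry"
    using sorted_split3[OF sy, of c] filter_eq_rep Peq P_def b_def Ry_def by metis
  have Rxg: "\<forall>v\<in>set Rx. c < v" unfolding Rx_def by auto
  have lens: "length P + a + length Rx = length P + b + length Ry"
    using xs_eq ys_eq lx ly by (metis length_append length_replicate add.assoc)
  then have RxNE: "Rx \<noteq> []" using ab by auto
  define k where "k = length P + a"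
  have klen: "k < length xs" using xs_eq RxNE k_def by simp
  have xk: "xs ! k = Rx ! 0" using xs_eq k_def by (simp add: nth_append)
  have yk: "ys ! k = c" using ys_eq k_def ab by (simp add: nth_append)
  have gt: "xs ! k > ys ! k" using xk yk Rxg RxNE by (simp add: hd_conv_nth[symmetric])
  have eqb: "\<forall>l<k. xs ! l = ys ! l"
  proof (intro allI impI)
    fix l assume "l < k"
    show "xs ! l = ys ! l"
    proof (cases "l < length P")
      case True
      then show ?thesis using xs_eq ys_eq by (simp add: nth_append)
    next
      case False
      then show ?thesis using xs_eq ys_eq \<open>l < k\<close> k_def ab by (auto simp: nth_append)
    qed
  qed
  show ?thesis unfolding leximin_greater_def
    using klen gt eqb xs_def ys_def by blast
qed


lemma sum_sorted:
  fixes f :: "'a::finite \<Rightarrow> real" and h :: "real \<Rightarrow> real"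
  shows "(\<Sum>a\<in>UNIV. h (f a)) = (\<Sum>l<length (sorted_vec f). h (sorted_vec f ! l))"
proof -
  have "(\<Sum>a\<in>UNIV. h (f a)) = sum_mset (image_mset (\<lambda>a. h (f a)) (mset_set UNIV))"
    by (rule sum_unfold_sum_mset)
  also have "\<dots> = sum_mset (image_mset h (image_mset f (mset_set UNIV)))"
    by (simp add: multiset.map_comp comp_def)
  also have "\<dots> = sum_mset (image_mset h (mset (sorted_vec f)))" using sv_props(1) by metis
  also have "\<dots> = sum_list (map h (sorted_vec f))"
    by (metis mset_map sum_mset_sum_list)
  also have "\<dots> = (\<Sum>l<length (sorted_vec f). h (sorted_vec f ! l))"
    by (simp add: sum_list_sum_nth atLeast0LessThan)
  finally show ?thesis .
qed

lemma not_lex: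
  fixes f g :: "'a::finite \<Rightarrow> real"
  assumes H: "\<forall>c. (\<Sum>a\<in>UNIV. min (f a) c) \<le> (\<Sum>a\<in>UNIV. min (g a) c)"
  shows "\<not> leximin_greater f g"
proof
  assume "leximin_greater f g"
  then obtain k where kl: "k < length (sorted_vec f)"
    and eq: "\<forall>l<k. sorted_vec f ! l = sorted_vec g ! l"
    and gt: "sorted_vec f ! k > sorted_vec g ! k"
    unfolding leximin_greater_def by blast
  define xs where "xs = sorted_vec f"
  define ys where "ys = sorted_vec g"
  define c where "c = xs ! k"
  have sx: "sorted xs" using sv_props xs_def by auto
  have len: "length ys = length xs" using sv_props xs_def ys_def by metis
  have A: "(\<Sum>a\<in>UNIV. min (f a) c) = (\<Sum>l<length xs. min (xs ! l) c)"
    using sum_sorted[of "\<lambda>v. min v c" f] xs_def by simp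
  have B: "(\<Sum>a\<in>UNIV. min (g a) c) = (\<Sum>l<length xs. min (ys ! l) c)"
    using sum_sorted[of "\<lambda>v. min v c" g] ys_def len by simp
  have "(\<Sum>l<length xs. min (ys ! l) c) < (\<Sum>l<length xs. min (xs ! l) c)"
  proof (rule sum_strict_mono_ex1)
    show "finite {..<length xs}" by simp
    show "\<forall>l\<in>{..<length xs}. min (ys ! l) c \<le> min (xs ! l) c"
    proof
      fix l assume l: "l \<in> {..<length xs}"
      show "min (ys ! l) c \<le> min (xs ! l) c"
      proof (cases "l < k")
        case True then show ?thesis using eq xs_def ys_def by simp
      next
        case False
        then have "xs ! k \<le> xs ! l" using sx l by (simp add: sorted_iff_nth_mono)
        then show ?thesis using c_def by simp
      qed
    qed
    show "\<exists>l\<in>{..<length xs}. min (ys ! l) c < min (xs ! l) c"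
      using kl gt xs_def ys_def c_def by (intro bexI[of _ k]) auto
  qed
  then show False using A B H by (metis not_le)
qed

lemma weight_aux:
  fixes a \<delta> :: "'k::finite \<Rightarrow> real"
  assumes H: "\<forall>c. (\<Sum>k\<in>{k. a k \<le> c}. \<delta> k) \<le> 0"
  shows "\<forall>w. card {k. w k > 0} = n \<longrightarrow> (\<forall>k. 0 \<le> w k) \<longrightarrow>
            (\<forall>k l. a k \<le> a l \<longrightarrow> w l \<le> w k) \<longrightarrow> (\<Sum>k\<in>UNIV. w k * \<delta> k) \<le> 0"
proof (induction n rule: less_induct)
  case (less n)
  show ?case
  proof (intro allI impI)
    fix w :: "'k \<Rightarrow> real"
    assume cn: "card {k. w k > 0} = n" and w0: "\<forall>k. 0 \<le> w k"
      and mono: "\<forall>k l. a k \<le> a l \<longrightarrow> w l \<le> w k"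
    define P where "P = {k. w k > 0}"
    show "(\<Sum>k\<in>UNIV. w k * \<delta> k) \<le> 0"
    proof (cases "P = {}")
      case True
      then have "\<forall>k. w k = 0" using w0 P_def by (metis empty_iff mem_Collect_eq order_le_less)
      then show ?thesis by simp
    next
      case False
      have fP: "finite P" by simp
      define m where "m = Min (w ` P)"
      have "m \<in> w ` P" using Min_in[of "w ` P"] fP False m_def by auto
      then obtain k0 where k0: "k0 \<in> P" "w k0 = m" by auto
      have mle: "\<forall>k\<in>P. m \<le> w k" using m_def fP by simp
      have mpos: "m > 0" using k0 P_def by simp
      define c0 where "c0 = Max (a ` P)"
      have "c0 \<in> a ` P" using Max_in[of "a ` P"] fP False c0_def by auto
      then obtain k1 where k1: "k1 \<in> P" "a k1 = c0" by auto
      have Peq: "P = {k. a k \<le> c0}"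
      proof
        show "P \<subseteq> {k. a k \<le> c0}" using c0_def fP by auto
        show "{k. a k \<le> c0} \<subseteq> P"
        proof
          fix k assume "k \<in> {k. a k \<le> c0}"
          then have "w k1 \<le> w k" using mono k1 by auto
          then show "k \<in> P" using k1 P_def by auto
        qed
      qed
      define w' where "w' = (\<lambda>k. if w k > 0 then w k - m else 0)"
      have w'0: "\<forall>k. 0 \<le> w' k" using w'_def mle P_def by auto
      have mono': "\<forall>k l. a k \<le> a l \<longrightarrow> w' l \<le> w' k"
      proof (intro allI impI)
        fix k l assume "a k \<le> a l"
        then have "w l \<le> w k" using mono by auto
        then show "w' l \<le> w' k" using w'_def w'0 mle P_def by (auto simp: not_less)
      qed
      have sub: "{k. w' k > 0} \<subseteq> P - {k0}" using w'_def k0 P_def by auto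
      have "card {k. w' k > 0} < n"
      proof -
        have "card {k. w' k > 0} \<le> card (P - {k0})" using sub by (simp add: card_mono)
        also have "\<dots> < card P" using k0 fP by (meson card_Diff1_less)
        finally show ?thesis using cn P_def by simp
      qed
      then have IH: "(\<Sum>k\<in>UNIV. w' k * \<delta> k) \<le> 0"
        using less.IH w'0 mono' by blast
      have split: "\<forall>k. w k * \<delta> k = w' k * \<delta> k + (if k \<in> P then m * \<delta> k else 0)"
        using w'_def P_def w0 by (auto simp: algebra_simps order_le_less)
      have "(\<Sum>k\<in>UNIV. w k * \<delta> k) = (\<Sum>k\<in>UNIV. w' k * \<delta> k) + (\<Sum>k\<in>UNIV. if k \<in> P then m * \<delta> k else 0)"
        using split by (simp add: sum.distrib)
      also have "(\<Sum>k\<in>UNIV. if k \<in> P then m * \<delta> k else 0) = m * (\<Sum>k\<in>P. \<delta> k)"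
        by (simp add: sum.If_cases sum_distrib_left)
      also have "(\<Sum>k\<in>P. \<delta> k) \<le> 0" using H Peq by simp
      then have "m * (\<Sum>k\<in>P. \<delta> k) \<le> 0" using mpos by (simp add: mult_nonneg_nonpos)
      finally show ?thesis using IH by simp
    qed
  qed
qed

lemma weight:
  fixes a \<delta> w :: "'k::finite \<Rightarrow> real"
  assumes "\<forall>c. (\<Sum>k\<in>{k. a k \<le> c}. \<delta> k) \<le> 0" "\<forall>k. 0 \<le> w k"
    "\<forall>k l. a k \<le> a l \<longrightarrow> w l \<le> w k"
  shows "(\<Sum>k\<in>UNIV. w k * \<delta> k) \<le> 0"
  using weight_aux[OF assms(1)] assms(2,3) by blast


definition Xs :: "('b::finite \<Rightarrow> 'j \<Rightarrow> 't \<Rightarrow> real) \<Rightarrow> 'j \<Rightarrow> 't \<Rightarrow> real" where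
  "Xs x j t = (\<Sum>i\<in>UNIV. x i j t)"

lemma feasible_iff:
  "feasible sp s x \<longleftrightarrow> (\<forall>i j t. 0 \<le> x i j t) \<and> (\<forall>j t. Xs x j t \<le> sp j t) \<and>
     (\<forall>j. (\<Sum>t\<in>UNIV. Xs x j t) \<le> s j)"
  unfolding feasible_def Xs_def by simp

definition QD where
  "QD sp s v d x c a b \<longleftrightarrow> (\<exists>\<epsilon>>0. \<exists>x' e' i0 t0. util v d x i0 t0 \<le> c \<and>
     (\<forall>i j t. 0 \<le> x' i j t) \<and>
     (\<forall>j t. 0 \<le> e' j t \<and> e' j t \<le> sp j t \<and> Xs x' j t \<le> e' j t + \<epsilon> * a j t) \<and>
     (\<forall>j. (\<Sum>t\<in>UNIV. e' j t) \<le> s j + \<epsilon> * b j) \<and>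
     (\<forall>i t. util v d x' i t = util v d x i t + (if i = i0 \<and> t = t0 then \<epsilon> else 0)))"

definition IMP where
  "IMP sp s v d x c \<longleftrightarrow> (\<exists>x' \<delta> i0 t0. feasible sp s x' \<and> \<delta> > 0 \<and> util v d x i0 t0 \<le> c \<and>
     ((\<forall>i t. util v d x' i t = util v d x i t + (if i = i0 \<and> t = t0 then \<delta> else 0)) \<or>
      (\<exists>i1 t1. c < util v d x i1 t1 \<and>
         (\<forall>i t. util v d x' i t = util v d x i t + (if i = i0 \<and> t = t0 then \<delta> else 0)
                  - (if i = i1 \<and> t = t1 then \<delta> else 0)))))"

lemma scale_facts:
  fixes x x' :: "'b::finite \<Rightarrow> 'j::finite \<Rightarrow> 't::finite \<Rightarrow> real"
  assumes x0: "\<forall>i j t. 0 \<le> x i j t" and x'0: "\<forall>i j t. 0 \<le> x' i j t"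
    and e'0: "\<forall>j t. 0 \<le> e' j t" and th: "0 \<le> \<theta>" "\<theta> \<le> 1"
    and zdef: "z = (\<lambda>i j t. x i j t + \<theta> * (x' i j t - x i j t))"
    and ezdef: "ez = (\<lambda>j t. Xs x j t + \<theta> * (e' j t - Xs x j t))"
  shows "\<forall>i j t. (1-\<theta>) * x i j t \<le> z i j t"
    and "\<forall>i j t. 0 \<le> z i j t"
    and "\<forall>j t. (1-\<theta>) * Xs x j t \<le> ez j t"
    and "\<forall>j t. 0 \<le> ez j t"
    and "\<forall>j t. Xs z j t - ez j t = \<theta> * (Xs x' j t - e' j t)"
    and "\<forall>j. (\<Sum>t\<in>UNIV. ez j t) = (1-\<theta>) * (\<Sum>t\<in>UNIV. Xs x j t) + \<theta> * (\<Sum>t\<in>UNIV. e' j t)"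
    and "\<forall>i t. util v d z i t = util v d x i t + \<theta> * (util v d x' i t - util v d x i t)"
    and "\<forall>j t. e' j t \<le> sp j t \<longrightarrow> Xs x j t \<le> sp j t \<longrightarrow> ez j t \<le> sp j t"
proof -
  show A: "\<forall>i j t. (1-\<theta>) * x i j t \<le> z i j t"
    using x'0 th zdef by (auto simp: algebra_simps)
  show "\<forall>i j t. 0 \<le> z i j t"
  proof (intro allI)
    fix i j t
    have "0 \<le> (1-\<theta>) * x i j t" using x0 th by simp
    then show "0 \<le> z i j t" using A by (meson order_trans)
  qed
  have X0: "\<forall>j t. 0 \<le> Xs x j t" using x0 by (simp add: Xs_def sum_nonneg)
  show B: "\<forall>j t. (1-\<theta>) * Xs x j t \<le> ez j t"
    using e'0 th ezdef by (auto simp: algebra_simps)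
  show "\<forall>j t. 0 \<le> ez j t"
  proof (intro allI)
    fix j t
    have "0 \<le> (1-\<theta>) * Xs x j t" using X0 th by simp
    then show "0 \<le> ez j t" using B by (meson order_trans)
  qed
  show "\<forall>j t. Xs z j t - ez j t = \<theta> * (Xs x' j t - e' j t)"
    unfolding zdef ezdef Xs_def
    by (simp add: sum.distrib sum_subtractf sum_distrib_left algebra_simps)
  show "\<forall>j. (\<Sum>t\<in>UNIV. ez j t) = (1-\<theta>) * (\<Sum>t\<in>UNIV. Xs x j t) + \<theta> * (\<Sum>t\<in>UNIV. e' j t)"
    unfolding ezdef
    by (simp add: sum.distrib sum_subtractf sum_distrib_left algebra_simps)
  show "\<forall>i t. util v d z i t = util v d x i t + \<theta> * (util v d x' i t - util v d x i t)"
    unfolding zdef util_def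
    by (simp add: sum.distrib sum_subtractf sum_distrib_left algebra_simps)
  show "\<forall>j t. e' j t \<le> sp j t \<longrightarrow> Xs x j t \<le> sp j t \<longrightarrow> ez j t \<le> sp j t"
  proof (intro allI impI)
    fix j t assume "e' j t \<le> sp j t" "Xs x j t \<le> sp j t"
    then have "(1-\<theta>) * Xs x j t + \<theta> * e' j t \<le> (1-\<theta>) * sp j t + \<theta> * sp j t"
      using th by (intro add_mono mult_left_mono) auto
    then show "ez j t \<le> sp j t" using ezdef by (simp add: algebra_simps)
  qed
qed


lemma step1:
  fixes x :: "'b::finite \<Rightarrow> 'j::finite \<Rightarrow> 't::finite \<Rightarrow> real"
  assumes feas: "feasible sp s x" and L: "util v d x i0 t0 \<le> c" and v1: "v i0 j0 = 1"
  shows "QD sp s v d x c (\<lambda>j t. if j = j0 \<and> t = t0 then 1 else 0) (\<lambda>j. 0)"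
proof -
  define x' where "x' = (\<lambda>i j t. x i j t + (if i = i0 \<and> j = j0 \<and> t = t0 then 1 else 0))"
  have F: "(\<forall>i j t. 0 \<le> x i j t) \<and> (\<forall>j t. Xs x j t \<le> sp j t) \<and>
     (\<forall>j. (\<Sum>t\<in>UNIV. Xs x j t) \<le> s j)" using feas feasible_iff by blast
  have X: "\<forall>j t. Xs x' j t = Xs x j t + (if j = j0 \<and> t = t0 then 1 else 0)"
  proof (intro allI)
    fix j t
    show "Xs x' j t = Xs x j t + (if j = j0 \<and> t = t0 then 1 else 0)"
      by (cases "j = j0 \<and> t = t0") (auto simp: Xs_def x'_def sum.distrib)
  qed
  have md: "\<And>(a::real) P. a * (if P then 1 else 0) = (if P then a else 0)" by simp
  have U: "\<forall>i t. util v d x' i t = util v d x i t + (if i = i0 \<and> t = t0 then 1 else 0)"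
  proof (intro allI)
    fix i t
    show "util v d x' i t = util v d x i t + (if i = i0 \<and> t = t0 then 1 else 0)"
      by (cases "i = i0 \<and> t = t0") (auto simp: util_def x'_def sum.distrib distrib_left v1 md)
  qed
  have x'0: "\<forall>i j t. 0 \<le> x' i j t" using F by (simp add: x'_def)
  show ?thesis unfolding QD_def
    apply (rule exI[of _ 1])
    apply (intro conjI)
     apply simp
    apply (rule exI[of _ x'])
    apply (rule exI[of _ "Xs x"])
    apply (rule exI[of _ i0])
    apply (rule exI[of _ t0])
    using L x'0 F X U by (auto simp: Xs_def sum_nonneg)
qed


lemma Xs_minus_point:
  "Xs (\<lambda>i j t. z i j t - (if i = i1 \<and> j = j0 \<and> t = t0 then \<delta> else 0)) j t
     = Xs z j t - (if j = j0 \<and> t = t0 then (\<delta>::real) else 0)"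
  by (cases "j = j0 \<and> t = t0") (auto simp: Xs_def sum_subtractf)

lemma util_minus_point:
  "util v d (\<lambda>i j t. z i j t - (if i = i1 \<and> j = j0 \<and> t = t0 then \<delta> else 0)) i t
     = util v d z i t - (if i = i1 \<and> t = t0 then v i1 j0 * (\<delta>::real) else 0)"
proof -
  have md: "\<And>(a::real) P. a * (if P then \<delta> else 0) = (if P then a * \<delta> else 0)" by simp
  show ?thesis
    by (cases "i = i1 \<and> t = t0") (auto simp: util_def sum_subtractf right_diff_distrib md)
qed

lemma theta_facts:
  fixes a \<epsilon> :: real
  assumes "a > 0" "\<epsilon> > 0"
  shows "0 < a / (a + \<epsilon>)" "a / (a + \<epsilon>) \<le> 1" "(1 - a / (a + \<epsilon>)) * a = a / (a + \<epsilon>) * \<epsilon>"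
    "a / (a + \<epsilon>) * (a + \<epsilon>) = a"
  using assms by (auto simp: field_simps)

lemma step2:
  fixes x :: "'b::finite \<Rightarrow> 'j::finite \<Rightarrow> 't::finite \<Rightarrow> real"
  assumes feas: "feasible sp s x" and vb: "\<forall>i j. v i j \<in> {0,1}"
    and Q: "QD sp s v d x c (\<lambda>j t. if j = j0 \<and> t = t0 then 1 else 0) (\<lambda>j. 0)"
    and pos: "x i1 j0 t0 > 0" and nI: "\<not> IMP sp s v d x c"
  shows "v i1 j0 = 1 \<and> util v d x i1 t0 \<le> c"
proof -
  obtain \<epsilon> x' e' ka kb where ep: "\<epsilon> > 0" and L: "util v d x ka kb \<le> c"
    and x'0: "\<forall>i j t. 0 \<le> x' i j t"
    and E: "\<forall>j t. 0 \<le> e' j t \<and> e' j t \<le> sp j t \<and> Xs x' j t \<le> e' j t + \<epsilon> * (if j = j0 \<and> t = t0 then 1 else 0)"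
    and S: "\<forall>j. (\<Sum>t\<in>UNIV. e' j t) \<le> s j + \<epsilon> * 0"
    and U: "\<forall>i t. util v d x' i t = util v d x i t + (if i = ka \<and> t = kb then \<epsilon> else 0)"
    using Q unfolding QD_def by blast
  have F0: "\<forall>i j t. 0 \<le> x i j t" and F1: "\<forall>j t. Xs x j t \<le> sp j t"
    and F2: "\<forall>j. (\<Sum>t\<in>UNIV. Xs x j t) \<le> s j" using feas feasible_iff by blast+
  define xv where "xv = x i1 j0 t0"
  define \<theta> where "\<theta> = xv / (xv + \<epsilon>)"
  have th: "0 < \<theta>" "\<theta> \<le> 1" "(1 - \<theta>) * xv = \<theta> * \<epsilon>"
    using theta_facts[of xv \<epsilon>] pos ep xv_def \<theta>_def by auto
  define z where "z = (\<lambda>i j t. x i j t + \<theta> * (x' i j t - x i j t))"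
  define ez where "ez = (\<lambda>j t. Xs x j t + \<theta> * (e' j t - Xs x j t))"
  have e'0: "\<forall>j t. 0 \<le> e' j t" using E by blast
  note SF = scale_facts[OF F0 x'0 e'0 less_imp_le[OF th(1)] th(2) z_def ez_def]
  define \<delta> where "\<delta> = \<theta> * \<epsilon>"
  have dpos: "\<delta> > 0" using th ep \<delta>_def by simp
  define z' where "z' = (\<lambda>i j t. z i j t - (if i = i1 \<and> j = j0 \<and> t = t0 then \<delta> else 0))"
  have z'0: "\<forall>i j t. 0 \<le> z' i j t"
  proof (intro allI)
    fix i j t
    show "0 \<le> z' i j t"
    proof (cases "i = i1 \<and> j = j0 \<and> t = t0")
      case True
      then have "(1-\<theta>) * x i j t \<le> z i j t" using SF(1) by blast
      then show ?thesis using True th(3) xv_def \<delta>_def z'_def by simp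
    next
      case False
      then show ?thesis using SF(2) z'_def by auto
    qed
  qed
  have Xz: "\<forall>j t. Xs z' j t \<le> sp j t"
  proof (intro allI)
    fix j t
    have "Xs z j t - ez j t = \<theta> * (Xs x' j t - e' j t)" using SF(5) by blast
    also have "\<dots> \<le> \<theta> * (\<epsilon> * (if j = j0 \<and> t = t0 then 1 else 0))"
      using E th by (intro mult_left_mono) (auto simp: algebra_simps)
    finally have "Xs z j t \<le> ez j t + (if j = j0 \<and> t = t0 then \<delta> else 0)"
      using \<delta>_def by (auto split: if_splits)
    moreover have "ez j t \<le> sp j t" using SF(8) E F1 by blast
    ultimately show "Xs z' j t \<le> sp j t" unfolding z'_def Xs_minus_point by simp
  qed
  have Tz: "\<forall>j. (\<Sum>t\<in>UNIV. Xs z' j t) \<le> s j"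
  proof (intro allI)
    fix j
    have le1: "\<forall>t. Xs z' j t \<le> ez j t"
    proof
      fix t
      have "Xs z j t - ez j t = \<theta> * (Xs x' j t - e' j t)" using SF(5) by blast
      also have "\<dots> \<le> \<theta> * (\<epsilon> * (if j = j0 \<and> t = t0 then 1 else 0))"
        using E th by (intro mult_left_mono) (auto simp: algebra_simps)
      finally have "Xs z j t \<le> ez j t + (if j = j0 \<and> t = t0 then \<delta> else 0)"
        using \<delta>_def by (auto split: if_splits)
      then show "Xs z' j t \<le> ez j t" unfolding z'_def Xs_minus_point by simp
    qed
    have "(\<Sum>t\<in>UNIV. Xs z' j t) \<le> (\<Sum>t\<in>UNIV. ez j t)" using le1 by (simp add: sum_mono)
    also have "\<dots> = (1-\<theta>) * (\<Sum>t\<in>UNIV. Xs x j t) + \<theta> * (\<Sum>t\<in>UNIV. e' j t)" using SF(6) by blast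
    also have "\<dots> \<le> (1-\<theta>) * s j + \<theta> * s j"
      using F2 S th by (intro add_mono mult_left_mono) auto
    finally show "(\<Sum>t\<in>UNIV. Xs z' j t) \<le> s j" by (simp add: algebra_simps)
  qed
  have fz: "feasible sp s z'" using z'0 Xz Tz feasible_iff by blast
  have Uz: "\<forall>i t. util v d z' i t = util v d x i t + (if i = ka \<and> t = kb then \<delta> else 0)
              - (if i = i1 \<and> t = t0 then v i1 j0 * \<delta> else 0)"
  proof (intro allI)
    fix i t
    have "util v d z i t = util v d x i t + \<theta> * (util v d x' i t - util v d x i t)" using SF(7) by blast
    then have "util v d z i t = util v d x i t + (if i = ka \<and> t = kb then \<delta> else 0)"
      using U \<delta>_def by simp
    then show "util v d z' i t = util v d x i t + (if i = ka \<and> t = kb then \<delta> else 0)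
              - (if i = i1 \<and> t = t0 then v i1 j0 * \<delta> else 0)"
      unfolding z'_def util_minus_point by simp
  qed
  show ?thesis
  proof (cases "v i1 j0 = 0")
    case True
    then have "IMP sp s v d x c" unfolding IMP_def
      using fz dpos L Uz by (intro exI[of _ z'] exI[of _ \<delta>] exI[of _ ka] exI[of _ kb]) auto
    then show ?thesis using nI by blast
  next
    case False
    then have v1: "v i1 j0 = 1" using vb by auto
    show ?thesis
    proof (rule ccontr)
      assume "\<not> (v i1 j0 = 1 \<and> util v d x i1 t0 \<le> c)"
      then have gt: "c < util v d x i1 t0" using v1 by auto
      have "IMP sp s v d x c" unfolding IMP_def
        using fz dpos L Uz v1 gt
        by (intro exI[of _ z'] exI[of _ \<delta>] exI[of _ ka] exI[of _ kb] conjI disjI2 exI[of _ i1] exI[of _ t0]) auto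
      then show False using nI by blast
    qed
  qed
qed


lemma sum_if_point:
  "(\<Sum>t\<in>(UNIV::'t::finite set). (if j = j0 \<and> t = t0 then (\<delta>::real) else 0)) = (if j = j0 then \<delta> else 0)"
  by (cases "j = j0") auto

lemma step3:
  fixes x :: "'b::finite \<Rightarrow> 'j::finite \<Rightarrow> 't::finite \<Rightarrow> real"
  assumes feas: "feasible sp s x"
    and Q: "QD sp s v d x c (\<lambda>j t. if j = j0 \<and> t = t0 then 1 else 0) (\<lambda>j. 0)"
    and slack: "Xs x j0 t0 < sp j0 t0"
  shows "QD sp s v d x c (\<lambda>j t. 0) (\<lambda>j. if j = j0 then 1 else 0)"
proof -
  obtain \<epsilon> x' e' ka kb where ep: "\<epsilon> > 0" and L: "util v d x ka kb \<le> c"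
    and x'0: "\<forall>i j t. 0 \<le> x' i j t"
    and E: "\<forall>j t. 0 \<le> e' j t \<and> e' j t \<le> sp j t \<and> Xs x' j t \<le> e' j t + \<epsilon> * (if j = j0 \<and> t = t0 then 1 else 0)"
    and S: "\<forall>j. (\<Sum>t\<in>UNIV. e' j t) \<le> s j + \<epsilon> * 0"
    and U: "\<forall>i t. util v d x' i t = util v d x i t + (if i = ka \<and> t = kb then \<epsilon> else 0)"
    using Q unfolding QD_def by blast
  have F0: "\<forall>i j t. 0 \<le> x i j t" and F1: "\<forall>j t. Xs x j t \<le> sp j t"
    and F2: "\<forall>j. (\<Sum>t\<in>UNIV. Xs x j t) \<le> s j" using feas feasible_iff by blast+
  define a where "a = sp j0 t0 - Xs x j0 t0"
  define \<theta> where "\<theta> = a / (a + \<epsilon>)"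
  have apos: "a > 0" using slack a_def by simp
  have th: "0 < \<theta>" "\<theta> \<le> 1" "\<theta> * (a + \<epsilon>) = a"
    using theta_facts[of a \<epsilon>] apos ep \<theta>_def by auto
  define z where "z = (\<lambda>i j t. x i j t + \<theta> * (x' i j t - x i j t))"
  define ez where "ez = (\<lambda>j t. Xs x j t + \<theta> * (e' j t - Xs x j t))"
  have e'0: "\<forall>j t. 0 \<le> e' j t" using E by blast
  note SF = scale_facts[OF F0 x'0 e'0 less_imp_le[OF th(1)] th(2) z_def ez_def]
  define \<delta> where "\<delta> = \<theta> * \<epsilon>"
  have dpos: "\<delta> > 0" using th ep \<delta>_def by simp
  define e'' where "e'' = (\<lambda>j t. ez j t + (if j = j0 \<and> t = t0 then \<delta> else 0))"
  have E1: "\<forall>j t. 0 \<le> e'' j t" using SF(4) dpos e''_def by simp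
  have E2: "\<forall>j t. e'' j t \<le> sp j t"
  proof (intro allI)
    fix j t
    show "e'' j t \<le> sp j t"
    proof (cases "j = j0 \<and> t = t0")
      case True
      have "\<theta> * e' j0 t0 \<le> \<theta> * sp j0 t0" using E th by (simp add: mult_left_mono)
      then have "ez j0 t0 + \<delta> \<le> Xs x j0 t0 + \<theta> * (a + \<epsilon>)"
        unfolding ez_def \<delta>_def a_def by (simp add: algebra_simps)
      then show ?thesis using True th(3) a_def e''_def by simp
    next
      case False
      then have "e'' j t = ez j t" using e''_def by auto
      then show ?thesis using SF(8) E F1 by simp
    qed
  qed
  have E3: "\<forall>j t. Xs z j t \<le> e'' j t + \<delta> * 0"
  proof (intro allI)
    fix j t
    have "Xs z j t - ez j t = \<theta> * (Xs x' j t - e' j t)" using SF(5) by blast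
    also have "\<dots> \<le> \<theta> * (\<epsilon> * (if j = j0 \<and> t = t0 then 1 else 0))"
      using E th by (intro mult_left_mono) (auto simp: algebra_simps)
    finally show "Xs z j t \<le> e'' j t + \<delta> * 0"
      using \<delta>_def e''_def by (auto split: if_splits)
  qed
  have E4: "\<forall>j. (\<Sum>t\<in>UNIV. e'' j t) \<le> s j + \<delta> * (if j = j0 then 1 else 0)"
  proof (intro allI)
    fix j
    have "(\<Sum>t\<in>UNIV. e'' j t) = (\<Sum>t\<in>UNIV. ez j t) + (if j = j0 then \<delta> else 0)"
      unfolding e''_def by (simp add: sum.distrib sum_if_point)
    also have "(\<Sum>t\<in>UNIV. ez j t) = (1-\<theta>) * (\<Sum>t\<in>UNIV. Xs x j t) + \<theta> * (\<Sum>t\<in>UNIV. e' j t)" using SF(6) by blast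
    also have "\<dots> \<le> (1-\<theta>) * s j + \<theta> * s j"
      using F2 S th by (intro add_mono mult_left_mono) auto
    finally show "(\<Sum>t\<in>UNIV. e'' j t) \<le> s j + \<delta> * (if j = j0 then 1 else 0)" by (auto simp: algebra_simps split: if_splits)
  qed
  have Uz: "\<forall>i t. util v d z i t = util v d x i t + (if i = ka \<and> t = kb then \<delta> else 0)"
    using SF(7) U \<delta>_def by simp
  show ?thesis unfolding QD_def
    apply (rule exI[of _ \<delta>])
    apply (intro conjI)
     apply (rule dpos)
    apply (rule exI[of _ z])
    apply (rule exI[of _ e''])
    apply (rule exI[of _ ka])
    apply (rule exI[of _ kb])
    using L SF(2) E1 E2 E3 E4 Uz by auto
qed

lemma step4:
  fixes x :: "'b::finite \<Rightarrow> 'j::finite \<Rightarrow> 't::finite \<Rightarrow> real"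
  assumes feas: "feasible sp s x"
    and Q: "QD sp s v d x c (\<lambda>j t. 0) (\<lambda>j. if j = j0 then 1 else 0)"
    and slack: "(\<Sum>t\<in>UNIV. Xs x j0 t) < s j0"
  shows "IMP sp s v d x c"
proof -
  obtain \<epsilon> x' e' ka kb where ep: "\<epsilon> > 0" and L: "util v d x ka kb \<le> c"
    and x'0: "\<forall>i j t. 0 \<le> x' i j t"
    and E: "\<forall>j t. 0 \<le> e' j t \<and> e' j t \<le> sp j t \<and> Xs x' j t \<le> e' j t + \<epsilon> * 0"
    and S: "\<forall>j. (\<Sum>t\<in>UNIV. e' j t) \<le> s j + \<epsilon> * (if j = j0 then 1 else 0)"
    and U: "\<forall>i t. util v d x' i t = util v d x i t + (if i = ka \<and> t = kb then \<epsilon> else 0)"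
    using Q unfolding QD_def by blast
  have F0: "\<forall>i j t. 0 \<le> x i j t" and F1: "\<forall>j t. Xs x j t \<le> sp j t"
    and F2: "\<forall>j. (\<Sum>t\<in>UNIV. Xs x j t) \<le> s j" using feas feasible_iff by blast+
  define a where "a = s j0 - (\<Sum>t\<in>UNIV. Xs x j0 t)"
  define \<theta> where "\<theta> = a / (a + \<epsilon>)"
  have apos: "a > 0" using slack a_def by simp
  have th: "0 < \<theta>" "\<theta> \<le> 1" "\<theta> * (a + \<epsilon>) = a"
    using theta_facts[of a \<epsilon>] apos ep \<theta>_def by auto
  define z where "z = (\<lambda>i j t. x i j t + \<theta> * (x' i j t - x i j t))"
  define ez where "ez = (\<lambda>j t. Xs x j t + \<theta> * (e' j t - Xs x j t))"
  have e'0: "\<forall>j t. 0 \<le> e' j t" using E by blast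
  note SF = scale_facts[OF F0 x'0 e'0 less_imp_le[OF th(1)] th(2) z_def ez_def]
  define \<delta> where "\<delta> = \<theta> * \<epsilon>"
  have dpos: "\<delta> > 0" using th ep \<delta>_def by simp
  have Xle: "\<forall>j t. Xs z j t \<le> ez j t"
  proof (intro allI)
    fix j t
    have "Xs z j t - ez j t = \<theta> * (Xs x' j t - e' j t)" using SF(5) by blast
    also have "\<dots> \<le> 0" using E th by (simp add: mult_nonneg_nonpos)
    finally show "Xs z j t \<le> ez j t" by simp
  qed
  have Xz: "\<forall>j t. Xs z j t \<le> sp j t" using Xle SF(8) E F1 by (meson order_trans)
  have Tz: "\<forall>j. (\<Sum>t\<in>UNIV. Xs z j t) \<le> s j"
  proof (intro allI)
    fix j
    have "(\<Sum>t\<in>UNIV. Xs z j t) \<le> (\<Sum>t\<in>UNIV. ez j t)" using Xle by (simp add: sum_mono)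
    also have "\<dots> = (1-\<theta>) * (\<Sum>t\<in>UNIV. Xs x j t) + \<theta> * (\<Sum>t\<in>UNIV. e' j t)" using SF(6) by blast
    also have "\<dots> \<le> s j"
    proof (cases "j = j0")
      case True
      have "(\<Sum>t\<in>UNIV. e' j0 t) \<le> s j0 + \<epsilon>" using S[rule_format, of j0] by simp
      then have "\<theta> * (\<Sum>t\<in>UNIV. e' j t) \<le> \<theta> * (s j + \<epsilon>)" using th True by (intro mult_left_mono) auto
      then show ?thesis using True th(3) a_def by (simp add: algebra_simps)
    next
      case False
      have "(\<Sum>t\<in>UNIV. e' j t) \<le> s j" using S[rule_format, of j] False by simp
      then have "(1-\<theta>) * (\<Sum>t\<in>UNIV. Xs x j t) + \<theta> * (\<Sum>t\<in>UNIV. e' j t) \<le> (1-\<theta>) * s j + \<theta> * s j"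
        using F2 th by (intro add_mono mult_left_mono) auto
      then show ?thesis by (simp add: algebra_simps)
    qed
    finally show "(\<Sum>t\<in>UNIV. Xs z j t) \<le> s j" .
  qed
  have fz: "feasible sp s z" using SF(2) Xz Tz feasible_iff by blast
  have Uz: "\<forall>i t. util v d z i t = util v d x i t + (if i = ka \<and> t = kb then \<delta> else 0)"
    using SF(7) U \<delta>_def by simp
  show ?thesis unfolding IMP_def
    using fz dpos L Uz by (intro exI[of _ z] exI[of _ \<delta>] exI[of _ ka] exI[of _ kb]) auto
qed

lemma step5:
  fixes x :: "'b::finite \<Rightarrow> 'j::finite \<Rightarrow> 't::finite \<Rightarrow> real"
  assumes feas: "feasible sp s x"
    and Q: "QD sp s v d x c (\<lambda>j t. 0) (\<lambda>j. if j = j0 then 1 else 0)"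
    and pos: "Xs x j0 t0 > 0"
  shows "QD sp s v d x c (\<lambda>j t. if j = j0 \<and> t = t0 then 1 else 0) (\<lambda>j. 0)"
proof -
  obtain \<epsilon> x' e' ka kb where ep: "\<epsilon> > 0" and L: "util v d x ka kb \<le> c"
    and x'0: "\<forall>i j t. 0 \<le> x' i j t"
    and E: "\<forall>j t. 0 \<le> e' j t \<and> e' j t \<le> sp j t \<and> Xs x' j t \<le> e' j t + \<epsilon> * 0"
    and S: "\<forall>j. (\<Sum>t\<in>UNIV. e' j t) \<le> s j + \<epsilon> * (if j = j0 then 1 else 0)"
    and U: "\<forall>i t. util v d x' i t = util v d x i t + (if i = ka \<and> t = kb then \<epsilon> else 0)"
    using Q unfolding QD_def by blast
  have F0: "\<forall>i j t. 0 \<le> x i j t" and F1: "\<forall>j t. Xs x j t \<le> sp j t"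
    and F2: "\<forall>j. (\<Sum>t\<in>UNIV. Xs x j t) \<le> s j" using feas feasible_iff by blast+
  define a where "a = Xs x j0 t0"
  define \<theta> where "\<theta> = a / (a + \<epsilon>)"
  have apos: "a > 0" using pos a_def by simp
  have th: "0 < \<theta>" "\<theta> \<le> 1" "(1 - \<theta>) * a = \<theta> * \<epsilon>"
    using theta_facts[of a \<epsilon>] apos ep \<theta>_def by auto
  define z where "z = (\<lambda>i j t. x i j t + \<theta> * (x' i j t - x i j t))"
  define ez where "ez = (\<lambda>j t. Xs x j t + \<theta> * (e' j t - Xs x j t))"
  have e'0: "\<forall>j t. 0 \<le> e' j t" using E by blast
  note SF = scale_facts[OF F0 x'0 e'0 less_imp_le[OF th(1)] th(2) z_def ez_def]
  define \<delta> where "\<delta> = \<theta> * \<epsilon>"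
  have dpos: "\<delta> > 0" using th ep \<delta>_def by simp
  define e'' where "e'' = (\<lambda>j t. ez j t - (if j = j0 \<and> t = t0 then \<delta> else 0))"
  have Xle: "\<forall>j t. Xs z j t \<le> ez j t"
  proof (intro allI)
    fix j t
    have "Xs z j t - ez j t = \<theta> * (Xs x' j t - e' j t)" using SF(5) by blast
    also have "\<dots> \<le> 0" using E th by (simp add: mult_nonneg_nonpos)
    finally show "Xs z j t \<le> ez j t" by simp
  qed
  have E1: "\<forall>j t. 0 \<le> e'' j t"
  proof (intro allI)
    fix j t
    show "0 \<le> e'' j t"
    proof (cases "j = j0 \<and> t = t0")
      case True
      have "(1-\<theta>) * Xs x j0 t0 \<le> ez j0 t0" using SF(3) by blast
      then show ?thesis using True th(3) a_def \<delta>_def e''_def by simp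
    next
      case False
      then show ?thesis using SF(4) e''_def by auto
    qed
  qed
  have E2: "\<forall>j t. e'' j t \<le> sp j t"
  proof (intro allI)
    fix j t
    have "ez j t \<le> sp j t" using SF(8) E F1 by blast
    then show "e'' j t \<le> sp j t" using dpos e''_def by auto
  qed
  have E3: "\<forall>j t. Xs z j t \<le> e'' j t + \<delta> * (if j = j0 \<and> t = t0 then 1 else 0)"
    using Xle e''_def by auto
  have E4: "\<forall>j. (\<Sum>t\<in>UNIV. e'' j t) \<le> s j + \<delta> * 0"
  proof (intro allI)
    fix j
    have "(\<Sum>t\<in>UNIV. e'' j t) = (\<Sum>t\<in>UNIV. ez j t) - (if j = j0 then \<delta> else 0)"
      unfolding e''_def by (simp add: sum_subtractf sum_if_point)
    also have "(\<Sum>t\<in>UNIV. ez j t) = (1-\<theta>) * (\<Sum>t\<in>UNIV. Xs x j t) + \<theta> * (\<Sum>t\<in>UNIV. e' j t)" using SF(6) by blast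
    also have "\<dots> \<le> (1-\<theta>) * s j + \<theta> * (s j + \<epsilon> * (if j = j0 then 1 else 0))"
      using F2 S th by (intro add_mono mult_left_mono) auto
    finally show "(\<Sum>t\<in>UNIV. e'' j t) \<le> s j + \<delta> * 0" using \<delta>_def by (auto simp: algebra_simps split: if_splits)
  qed
  have Uz: "\<forall>i t. util v d z i t = util v d x i t + (if i = ka \<and> t = kb then \<delta> else 0)"
    using SF(7) U \<delta>_def by simp
  show ?thesis unfolding QD_def
    apply (rule exI[of _ \<delta>])
    apply (intro conjI)
     apply (rule dpos)
    apply (rule exI[of _ z])
    apply (rule exI[of _ e''])
    apply (rule exI[of _ ka])
    apply (rule exI[of _ kb])
    using L SF(2) E1 E2 E3 E4 Uz by auto
qed


lemma swap3:
  fixes g :: "'b::finite \<Rightarrow> 'j::finite \<Rightarrow> 't::finite \<Rightarrow> real"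
  shows "(\<Sum>i\<in>UNIV. \<Sum>t\<in>UNIV. \<Sum>j\<in>UNIV. g i j t) = (\<Sum>j\<in>UNIV. \<Sum>t\<in>UNIV. \<Sum>i\<in>UNIV. g i j t)"
proof -
  have "(\<Sum>i\<in>UNIV. \<Sum>t\<in>UNIV. \<Sum>j\<in>UNIV. g i j t) = (\<Sum>i\<in>UNIV. \<Sum>j\<in>UNIV. \<Sum>t\<in>UNIV. g i j t)"
    by (rule sum.cong[OF refl]) (rule sum.swap)
  also have "\<dots> = (\<Sum>j\<in>UNIV. \<Sum>i\<in>UNIV. \<Sum>t\<in>UNIV. g i j t)" by (rule sum.swap)
  also have "\<dots> = (\<Sum>j\<in>UNIV. \<Sum>t\<in>UNIV. \<Sum>i\<in>UNIV. g i j t)"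
    by (rule sum.cong[OF refl]) (rule sum.swap)
  finally show ?thesis .
qed

lemma core:
  fixes x y :: "'b::finite \<Rightarrow> 'j::finite \<Rightarrow> 't::finite \<Rightarrow> real"
  assumes feas: "feasible sp s x" and vb: "\<forall>i j. v i j \<in> {0,1}"
    and nI: "\<not> IMP sp s v d x c" and fy: "feasible sp s y"
  shows "(\<Sum>i\<in>UNIV. \<Sum>t\<in>UNIV. if util v d x i t \<le> c then util v d y i t else 0)
       \<le> (\<Sum>i\<in>UNIV. \<Sum>t\<in>UNIV. if util v d x i t \<le> c then util v d x i t else 0)"
proof -
  define A where "A = (\<lambda>j0 t0. QD sp s v d x c (\<lambda>j t. if j = j0 \<and> t = t0 then 1 else 0) (\<lambda>j. 0))"
  define B where "B = (\<lambda>j0. QD sp s v d x c (\<lambda>j t. 0) (\<lambda>j. if j = j0 then 1 else 0))"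
  define Lc where "Lc = (\<lambda>i t. util v d x i t \<le> c)"
  have F0: "\<forall>i j t. 0 \<le> x i j t" and F1: "\<forall>j t. Xs x j t \<le> sp j t"
    and F2: "\<forall>j. (\<Sum>t\<in>UNIV. Xs x j t) \<le> s j" using feas feasible_iff by blast+
  have G0: "\<forall>i j t. 0 \<le> y i j t" and G1: "\<forall>j t. Xs y j t \<le> sp j t"
    and G2: "\<forall>j. (\<Sum>t\<in>UNIV. Xs y j t) \<le> s j" using fy feasible_iff by blast+
  have h1: "\<And>i j t. Lc i t \<Longrightarrow> v i j = 1 \<Longrightarrow> A j t"
    using step1[OF feas] A_def Lc_def by blast
  have h2: "\<And>i j t. A j t \<Longrightarrow> x i j t > 0 \<Longrightarrow> v i j = 1 \<and> Lc i t"
    using step2[OF feas vb _ _ nI] A_def Lc_def by blast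
  have h3: "\<And>j t. A j t \<Longrightarrow> \<not> B j \<Longrightarrow> Xs x j t = sp j t"
  proof -
    fix j t assume "A j t" "\<not> B j"
    then have "\<not> Xs x j t < sp j t" using step3[OF feas] A_def B_def by blast
    then show "Xs x j t = sp j t" using F1 by (meson antisym not_le)
  qed
  have h4: "\<And>j. B j \<Longrightarrow> (\<Sum>t\<in>UNIV. Xs x j t) = s j"
  proof -
    fix j assume "B j"
    then have "\<not> (\<Sum>t\<in>UNIV. Xs x j t) < s j" using step4[OF feas] nI B_def by blast
    then show "(\<Sum>t\<in>UNIV. Xs x j t) = s j" using F2 by (meson antisym not_le)
  qed
  have h5: "\<And>j t. B j \<Longrightarrow> Xs x j t > 0 \<Longrightarrow> A j t"
    using step5[OF feas] A_def B_def by blast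
  have X0: "\<forall>j t. 0 \<le> Xs x j t" using F0 by (simp add: Xs_def sum_nonneg)
  have Y0: "\<forall>j t. 0 \<le> Xs y j t" using G0 by (simp add: Xs_def sum_nonneg)
  define W where "W = (\<lambda>(z::'b \<Rightarrow> 'j \<Rightarrow> 't \<Rightarrow> real) i t. (\<Sum>j\<in>UNIV. v i j * z i j t))"
  have uW: "\<And>z i t. util v d z i t = W z i t - d i t" unfolding W_def util_def by simp
  have re: "\<And>z. (\<Sum>i\<in>UNIV. \<Sum>t\<in>UNIV. if Lc i t then W z i t else 0)
      = (\<Sum>j\<in>UNIV. \<Sum>t\<in>UNIV. \<Sum>i\<in>UNIV. if Lc i t then v i j * z i j t else 0)"
  proof -
    fix z :: "'b \<Rightarrow> 'j \<Rightarrow> 't \<Rightarrow> real"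
    have "(\<Sum>i\<in>UNIV. \<Sum>t\<in>UNIV. if Lc i t then W z i t else 0)
       = (\<Sum>i\<in>UNIV. \<Sum>t\<in>UNIV. \<Sum>j\<in>UNIV. if Lc i t then v i j * z i j t else 0)"
      unfolding W_def by (intro sum.cong refl) (auto)
    also have "\<dots> = (\<Sum>j\<in>UNIV. \<Sum>t\<in>UNIV. \<Sum>i\<in>UNIV. if Lc i t then v i j * z i j t else 0)"
      by (rule swap3)
    finally show "(\<Sum>i\<in>UNIV. \<Sum>t\<in>UNIV. if Lc i t then W z i t else 0)
      = (\<Sum>j\<in>UNIV. \<Sum>t\<in>UNIV. \<Sum>i\<in>UNIV. if Lc i t then v i j * z i j t else 0)" .
  qed
  have "(\<Sum>j\<in>UNIV. \<Sum>t\<in>UNIV. \<Sum>i\<in>UNIV. if Lc i t then v i j * y i j t else 0)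
      \<le> (\<Sum>j\<in>UNIV. \<Sum>t\<in>UNIV. \<Sum>i\<in>UNIV. if A j t then y i j t else 0)"
  proof (intro sum_mono)
    fix j t i
    show "(if Lc i t then v i j * y i j t else 0) \<le> (if A j t then y i j t else 0)"
    proof -
      have "v i j = 0 \<or> v i j = 1" using vb by auto
      then show ?thesis using h1[of i t j] G0 by (elim disjE) auto
    qed
  qed
  also have "\<dots> = (\<Sum>j\<in>UNIV. \<Sum>t\<in>UNIV. if A j t then Xs y j t else 0)"
    by (intro sum.cong refl) (auto simp: Xs_def)
  also have "\<dots> \<le> (\<Sum>j\<in>UNIV. \<Sum>t\<in>UNIV. if A j t then Xs x j t else 0)"
  proof (rule sum_mono)
    fix j
    show "(\<Sum>t\<in>UNIV. if A j t then Xs y j t else 0) \<le> (\<Sum>t\<in>UNIV. if A j t then Xs x j t else 0)"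
    proof (cases "B j")
      case True
      have "(\<Sum>t\<in>UNIV. if A j t then Xs y j t else 0) \<le> (\<Sum>t\<in>UNIV. Xs y j t)"
        using Y0 by (intro sum_mono) auto
      also have "\<dots> \<le> s j" using G2 by blast
      also have "\<dots> = (\<Sum>t\<in>UNIV. Xs x j t)" using h4 True by simp
      also have "\<dots> = (\<Sum>t\<in>UNIV. if A j t then Xs x j t else 0)"
      proof (rule sum.cong[OF refl])
        fix t
        show "Xs x j t = (if A j t then Xs x j t else 0)"
          using h5[OF True, of t] X0 by (cases "Xs x j t > 0") (auto simp: not_less order_antisym)
      qed
      finally show ?thesis .
    next
      case False
      show ?thesis
      proof (intro sum_mono)
        fix t
        show "(if A j t then Xs y j t else 0) \<le> (if A j t then Xs x j t else 0)"
          using h3[OF _ False, of t] G1 by auto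
      qed
    qed
  qed
  also have "\<dots> = (\<Sum>j\<in>UNIV. \<Sum>t\<in>UNIV. \<Sum>i\<in>UNIV. if A j t then x i j t else 0)"
    by (intro sum.cong refl) (auto simp: Xs_def)
  also have "\<dots> \<le> (\<Sum>j\<in>UNIV. \<Sum>t\<in>UNIV. \<Sum>i\<in>UNIV. if Lc i t then v i j * x i j t else 0)"
  proof (intro sum_mono)
    fix j t i
    show "(if A j t then x i j t else 0) \<le> (if Lc i t then v i j * x i j t else 0)"
    proof (cases "A j t \<and> x i j t > 0")
      case True
      then show ?thesis using h2[of j t i] by auto
    next
      case False
      have "v i j = 0 \<or> v i j = 1" using vb by auto
      moreover have "0 \<le> x i j t" using F0 by blast
      ultimately show ?thesis using False by (auto simp: not_less)
    qed
  qed
  finally have main: "(\<Sum>i\<in>UNIV. \<Sum>t\<in>UNIV. if Lc i t then W y i t else 0)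
      \<le> (\<Sum>i\<in>UNIV. \<Sum>t\<in>UNIV. if Lc i t then W x i t else 0)" using re by simp
  have split: "\<And>z. (\<Sum>i\<in>UNIV. \<Sum>t\<in>UNIV. if Lc i t then util v d z i t else 0)
     = (\<Sum>i\<in>UNIV. \<Sum>t\<in>UNIV. if Lc i t then W z i t else 0) - (\<Sum>i\<in>UNIV. \<Sum>t\<in>UNIV. if Lc i t then d i t else 0)"
    unfolding uW by (simp add: sum_subtractf[symmetric]) (intro sum.cong refl, auto)
  show ?thesis using main split[of x] split[of y] Lc_def by simp
qed


definition UU :: "('b \<Rightarrow> 'j::finite \<Rightarrow> real) \<Rightarrow> ('b \<Rightarrow> 't \<Rightarrow> real) \<Rightarrow>
   ('b \<Rightarrow> 'j \<Rightarrow> 't \<Rightarrow> real) \<Rightarrow> 'b \<times> 't \<Rightarrow> real" where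
  "UU v d z = (\<lambda>(i,t). util v d z i t)"

lemma UU_simp[simp]: "UU v d z (i,t) = util v d z i t" by (simp add: UU_def)

lemma sum_pair:
  fixes f :: "'b::finite \<Rightarrow> 't::finite \<Rightarrow> real"
  shows "(\<Sum>i\<in>UNIV. \<Sum>t\<in>UNIV. f i t) = (\<Sum>p\<in>UNIV. f (fst p) (snd p))"
proof -
  have "(\<Sum>i\<in>UNIV. \<Sum>t\<in>UNIV. f i t) = (\<Sum>p\<in>UNIV \<times> UNIV. f (fst p) (snd p))"
    by (simp add: sum.cartesian_product case_prod_beta)
  then show ?thesis by (simp only: UNIV_Times_UNIV)
qed

lemma nw_pair:
  fixes x :: "'b::finite \<Rightarrow> 'j::finite \<Rightarrow> 't::finite \<Rightarrow> real"
  shows "nash_welfare v d x = (1 / real (card (UNIV :: 't::finite set))) *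
     (\<Sum>p\<in>UNIV. ln (UU v d x p))"
proof -
  have "nash_welfare v d x = (1 / real (card (UNIV :: 't set))) *
     (\<Sum>i\<in>UNIV. \<Sum>t\<in>(UNIV::'t set). ln (util v d x i t))"
    unfolding nash_welfare_def by (simp add: sum_distrib_left)
  also have "(\<Sum>i\<in>UNIV. \<Sum>t\<in>(UNIV::'t set). ln (util v d x i t)) = (\<Sum>p\<in>UNIV. ln (UU v d x p))"
    by (simp add: sum_pair UU_def case_prod_beta)
  finally show ?thesis .
qed

lemma tight_pair:
  fixes x y :: "'b::finite \<Rightarrow> 'j::finite \<Rightarrow> 't::finite \<Rightarrow> real"
  assumes feas: "feasible sp s x" and vb: "\<forall>i j. v i j \<in> {0,1}"
    and nI: "\<forall>c. \<not> IMP sp s v d x c" and fy: "feasible sp s y"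
  shows "(\<Sum>p\<in>{p. UU v d x p \<le> c}. UU v d y p - UU v d x p) \<le> 0"
proof -
  have C: "(\<Sum>i\<in>UNIV. \<Sum>t\<in>UNIV. if util v d x i t \<le> c then util v d y i t else 0)
       \<le> (\<Sum>i\<in>UNIV. \<Sum>t\<in>UNIV. if util v d x i t \<le> c then util v d x i t else 0)"
    using core[OF feas vb _ fy] nI by blast
  have E: "\<And>z. (\<Sum>i\<in>UNIV. \<Sum>t\<in>UNIV. if util v d x i t \<le> c then util v d z i t else 0)
       = (\<Sum>p\<in>{p. UU v d x p \<le> c}. UU v d z p)"
  proof -
    fix z :: "'b \<Rightarrow> 'j \<Rightarrow> 't \<Rightarrow> real"
    have "(\<Sum>i\<in>UNIV. \<Sum>t\<in>UNIV. if util v d x i t \<le> c then util v d z i t else 0)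
       = (\<Sum>p\<in>UNIV. if UU v d x p \<le> c then UU v d z p else 0)"
      by (subst sum_pair) (rule sum.cong, auto simp: UU_def case_prod_beta)
    also have "\<dots> = (\<Sum>p\<in>{p. UU v d x p \<le> c}. UU v d z p)"
      by (simp add: sum.If_cases)
    finally show "(\<Sum>i\<in>UNIV. \<Sum>t\<in>UNIV. if util v d x i t \<le> c then util v d z i t else 0)
       = (\<Sum>p\<in>{p. UU v d x p \<le> c}. UU v d z p)" .
  qed
  show ?thesis using C E[of x] E[of y] by (simp add: sum_subtractf)
qed

lemma mnw_from_tight:
  fixes x :: "'b::finite \<Rightarrow> 'j::finite \<Rightarrow> 't::finite \<Rightarrow> real"
  assumes feas: "feasible sp s x" and pos: "\<forall>i t. util v d x i t > 0"
    and T: "\<And>y c. feasible sp s y \<Longrightarrow> (\<Sum>p\<in>{p. UU v d x p \<le> c}. UU v d y p - UU v d x p) \<le> 0"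
  shows "max_nash_welfare v d sp s x"
  unfolding max_nash_welfare_def
proof (intro conjI allI impI)
  show "feasible sp s x" by (rule feas)
  show "\<And>i t. 0 < util v d x i t" using pos by blast
  fix y assume H: "feasible sp s y \<and> (\<forall>i t. 0 < util v d y i t)"
  have px: "\<forall>p. UU v d x p > 0" using pos by (auto simp: UU_def)
  have py: "\<forall>p. UU v d y p > 0" using H by (auto simp: UU_def)
  have pt: "\<forall>p. ln (UU v d y p) \<le> ln (UU v d x p) + (1 / UU v d x p) * (UU v d y p - UU v d x p)"
  proof
    fix p
    have a: "UU v d x p > 0" using px by blast
    have b: "UU v d y p > 0" using py by blast
    have "ln (UU v d y p / UU v d x p) \<le> UU v d y p / UU v d x p - 1"
      using a b by (intro ln_le_minus_one divide_pos_pos)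
    then show "ln (UU v d y p) \<le> ln (UU v d x p) + (1 / UU v d x p) * (UU v d y p - UU v d x p)"
      using a b by (simp add: ln_div field_simps del: UU_simp)
  qed
  have W: "(\<Sum>p\<in>UNIV. (1 / UU v d x p) * (UU v d y p - UU v d x p)) \<le> 0"
  proof (rule weight)
    show "\<forall>c. (\<Sum>p\<in>{p. UU v d x p \<le> c}. UU v d y p - UU v d x p) \<le> 0" using T H by blast
    show "\<forall>p. 0 \<le> 1 / UU v d x p" using px by (simp add: less_imp_le)
    show "\<forall>k l. UU v d x k \<le> UU v d x l \<longrightarrow> 1 / UU v d x l \<le> 1 / UU v d x k"
      using px by (auto intro: divide_left_mono mult_pos_pos)
  qed
  have "(\<Sum>p\<in>UNIV. ln (UU v d y p)) \<le> (\<Sum>p\<in>UNIV. ln (UU v d x p) + (1 / UU v d x p) * (UU v d y p - UU v d x p))"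
    using pt by (intro sum_mono) auto
  also have "\<dots> = (\<Sum>p\<in>UNIV. ln (UU v d x p)) + (\<Sum>p\<in>UNIV. (1 / UU v d x p) * (UU v d y p - UU v d x p))"
    by (simp add: sum.distrib)
  finally have "(\<Sum>p\<in>UNIV. ln (UU v d y p)) \<le> (\<Sum>p\<in>UNIV. ln (UU v d x p))" using W by simp
  then show "nash_welfare v d y \<le> nash_welfare v d x"
    unfolding nw_pair by (intro mult_left_mono) auto
qed

lemma lex_from_tight:
  fixes x :: "'b::finite \<Rightarrow> 'j::finite \<Rightarrow> 't::finite \<Rightarrow> real"
  assumes feas: "feasible sp s x"
    and T: "\<And>y c. feasible sp s y \<Longrightarrow> (\<Sum>p\<in>{p. UU v d x p \<le> c}. UU v d y p - UU v d x p) \<le> 0"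
  shows "leximin_optimal v d sp s x"
  unfolding leximin_optimal_def
proof (intro conjI notI)
  show "feasible sp s x" by (rule feas)
  assume "\<exists>y. feasible sp s y \<and> leximin_greater (\<lambda>(i, t). util v d y i t) (\<lambda>(i, t). util v d x i t)"
  then obtain y where fy: "feasible sp s y" and lg: "leximin_greater (UU v d y) (UU v d x)"
    unfolding UU_def by blast
  have "\<forall>c. (\<Sum>a\<in>UNIV. min (UU v d y a) c) \<le> (\<Sum>a\<in>UNIV. min (UU v d x a) c)"
  proof
    fix c
    have "(\<Sum>a\<in>UNIV. min (UU v d y a) c) \<le> (\<Sum>a\<in>UNIV. min (UU v d x a) c +
        (if UU v d x a \<le> c then UU v d y a - UU v d x a else 0))"
      by (intro sum_mono) auto
    also have "\<dots> = (\<Sum>a\<in>UNIV. min (UU v d x a) c) + (\<Sum>a\<in>{p. UU v d x p \<le> c}. UU v d y a - UU v d x a)"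
      by (simp add: sum.distrib sum.If_cases)
    also have "\<dots> \<le> (\<Sum>a\<in>UNIV. min (UU v d x a) c)" using T[OF fy, of c] by simp
    finally show "(\<Sum>a\<in>UNIV. min (UU v d y a) c) \<le> (\<Sum>a\<in>UNIV. min (UU v d x a) c)" .
  qed
  then show False using not_lex lg by blast
qed


lemma convex_feas:
  fixes x x' :: "'b::finite \<Rightarrow> 'j::finite \<Rightarrow> 't::finite \<Rightarrow> real"
  assumes fx: "feasible sp s x" and fx': "feasible sp s x'" and th: "0 \<le> \<theta>" "\<theta> \<le> 1"
  shows "feasible sp s (\<lambda>i j t. x i j t + \<theta> * (x' i j t - x i j t))"
    and "\<forall>i t. util v d (\<lambda>i j t. x i j t + \<theta> * (x' i j t - x i j t)) i t
           = util v d x i t + \<theta> * (util v d x' i t - util v d x i t)"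
proof -
  have F0: "\<forall>i j t. 0 \<le> x i j t" and F1: "\<forall>j t. Xs x j t \<le> sp j t"
    and F2: "\<forall>j. (\<Sum>t\<in>UNIV. Xs x j t) \<le> s j" using fx feasible_iff by blast+
  have G0: "\<forall>i j t. 0 \<le> x' i j t" and G1: "\<forall>j t. Xs x' j t \<le> sp j t"
    and G2: "\<forall>j. (\<Sum>t\<in>UNIV. Xs x' j t) \<le> s j" using fx' feasible_iff by blast+
  have X'0: "\<forall>j t. 0 \<le> Xs x' j t" using G0 by (simp add: Xs_def sum_nonneg)
  define z where "z = (\<lambda>i j t. x i j t + \<theta> * (x' i j t - x i j t))"
  define ez where "ez = (\<lambda>j t. Xs x j t + \<theta> * (Xs x' j t - Xs x j t))"
  note SF = scale_facts[OF F0 G0 X'0 th z_def ez_def]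
  have Xeq: "\<forall>j t. Xs z j t = ez j t" using SF(5) by simp
  have "\<forall>j t. Xs z j t \<le> sp j t" using Xeq SF(8) G1 F1 by simp
  moreover have "\<forall>j. (\<Sum>t\<in>UNIV. Xs z j t) \<le> s j"
  proof
    fix j
    have "(\<Sum>t\<in>UNIV. Xs z j t) = (1-\<theta>) * (\<Sum>t\<in>UNIV. Xs x j t) + \<theta> * (\<Sum>t\<in>UNIV. Xs x' j t)"
      using Xeq SF(6) by simp
    also have "\<dots> \<le> (1-\<theta>) * s j + \<theta> * s j"
      using F2 G2 th by (intro add_mono mult_left_mono) auto
    finally show "(\<Sum>t\<in>UNIV. Xs z j t) \<le> s j" by (simp add: algebra_simps)
  qed
  ultimately show "feasible sp s (\<lambda>i j t. x i j t + \<theta> * (x' i j t - x i j t))"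
    using SF(2) feasible_iff z_def by blast
  show "\<forall>i t. util v d (\<lambda>i j t. x i j t + \<theta> * (x' i j t - x i j t)) i t
           = util v d x i t + \<theta> * (util v d x' i t - util v d x i t)"
    using SF(7) z_def by simp
qed

lemma imp_small:
  fixes x :: "'b::finite \<Rightarrow> 'j::finite \<Rightarrow> 't::finite \<Rightarrow> real"
  assumes fx: "feasible sp s x" and I: "IMP sp s v d x c"
  shows "\<exists>z \<delta> k. feasible sp s z \<and> \<delta> > 0 \<and>
    ((\<forall>p. UU v d z p = UU v d x p + (if p = k then \<delta> else 0)) \<or>
     (\<exists>l. UU v d x k + 2 * \<delta> < UU v d x l \<and>
        (\<forall>p. UU v d z p = UU v d x p + (if p = k then \<delta> else 0) - (if p = l then \<delta> else 0))))"
proof -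
  obtain x' \<delta> i0 t0 where fx': "feasible sp s x'" and dp: "\<delta> > 0" and L: "util v d x i0 t0 \<le> c"
    and D: "(\<forall>i t. util v d x' i t = util v d x i t + (if i = i0 \<and> t = t0 then \<delta> else 0)) \<or>
      (\<exists>i1 t1. c < util v d x i1 t1 \<and>
         (\<forall>i t. util v d x' i t = util v d x i t + (if i = i0 \<and> t = t0 then \<delta> else 0)
                  - (if i = i1 \<and> t = t1 then \<delta> else 0)))"
    using I unfolding IMP_def by blast
  show ?thesis
  proof (cases "\<forall>i t. util v d x' i t = util v d x i t + (if i = i0 \<and> t = t0 then \<delta> else 0)")
    case True
    have "\<forall>p. UU v d x' p = UU v d x p + (if p = (i0,t0) then \<delta> else 0)"
    proof
      fix p :: "'b \<times> 't"
      obtain i t where "p = (i,t)" by (cases p)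
      then show "UU v d x' p = UU v d x p + (if p = (i0,t0) then \<delta> else 0)" using True by simp
    qed
    then show ?thesis using fx' dp by blast
  next
    case False
    then obtain i1 t1 where gt: "c < util v d x i1 t1" and
      U: "\<forall>i t. util v d x' i t = util v d x i t + (if i = i0 \<and> t = t0 then \<delta> else 0)
                  - (if i = i1 \<and> t = t1 then \<delta> else 0)" using D by blast
    define g where "g = util v d x i1 t1 - util v d x i0 t0"
    have gp: "g > 0" using gt L g_def by simp
    define \<theta> where "\<theta> = min 1 (g / (4 * \<delta>))"
    have th: "0 < \<theta>" "\<theta> \<le> 1" using gp dp \<theta>_def by auto
    have thd: "\<theta> * \<delta> \<le> g / 4"
    proof -
      have "\<theta> \<le> g / (4 * \<delta>)" using \<theta>_def by simp
      then have "\<theta> * \<delta> \<le> g / (4 * \<delta>) * \<delta>" by (rule mult_right_mono) (use dp in auto)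
      also have "\<dots> = g / 4" using dp by (simp add: field_simps)
      finally show ?thesis .
    qed
    define z where "z = (\<lambda>i j t. x i j t + \<theta> * (x' i j t - x i j t))"
    have fz: "feasible sp s z" using convex_feas(1)[OF fx fx' less_imp_le[OF th(1)] th(2)] z_def by simp
    have Uz: "\<forall>i t. util v d z i t = util v d x i t + \<theta> * (util v d x' i t - util v d x i t)"
      using convex_feas(2)[OF fx fx' less_imp_le[OF th(1)] th(2)] z_def by simp
    define \<delta>' where "\<delta>' = \<theta> * \<delta>"
    have d'p: "\<delta>' > 0" using th dp \<delta>'_def by simp
    have P: "\<forall>p. UU v d z p = UU v d x p + (if p = (i0,t0) then \<delta>' else 0) - (if p = (i1,t1) then \<delta>' else 0)"
    proof
      fix p :: "'b \<times> 't"
      obtain i t where "p = (i,t)" by (cases p)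
      define A where "A = (if i = i0 \<and> t = t0 then \<delta> else 0)"
      define B where "B = (if i = i1 \<and> t = t1 then \<delta> else 0)"
      have u1: "util v d x' i t = util v d x i t + A - B" using U A_def B_def by simp
      have u2: "util v d z i t = util v d x i t + \<theta> * (util v d x' i t - util v d x i t)" using Uz by simp
      have u3: "util v d z i t = util v d x i t + \<theta> * A - \<theta> * B" unfolding u2 u1 by (simp add: algebra_simps)
      have a: "(if p = (i0,t0) then \<delta>' else 0) = \<theta> * A" using \<open>p = (i,t)\<close> A_def \<delta>'_def by auto
      have b: "(if p = (i1,t1) then \<delta>' else 0) = \<theta> * B" using \<open>p = (i,t)\<close> B_def \<delta>'_def by auto
      show "UU v d z p = UU v d x p + (if p = (i0,t0) then \<delta>' else 0) - (if p = (i1,t1) then \<delta>' else 0)"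
        unfolding a b using u3 \<open>p = (i,t)\<close> by simp
    qed
    have "UU v d x (i0,t0) + 2 * \<delta>' < UU v d x (i1,t1)"
      using thd gp g_def \<delta>'_def by simp
    then show ?thesis using fz d'p P by blast
  qed
qed

lemma two_point:
  fixes F G :: "'p::finite \<Rightarrow> real"
  assumes "k \<noteq> l" "\<forall>p. p \<noteq> k \<and> p \<noteq> l \<longrightarrow> F p = G p" "F k + F l > G k + G l"
  shows "(\<Sum>p\<in>UNIV. F p) > (\<Sum>p\<in>UNIV. G p)"
proof -
  have eF: "(\<Sum>p\<in>UNIV. F p) = F k + (F l + (\<Sum>p\<in>UNIV - {k} - {l}. F p))"
    using assms(1) by (simp add: sum.remove[of UNIV k] sum.remove[of "UNIV - {k}" l])
  have eG: "(\<Sum>p\<in>UNIV. G p) = G k + (G l + (\<Sum>p\<in>UNIV - {k} - {l}. G p))"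
    using assms(1) by (simp add: sum.remove[of UNIV k] sum.remove[of "UNIV - {k}" l])
  have "(\<Sum>p\<in>UNIV - {k} - {l}. F p) = (\<Sum>p\<in>UNIV - {k} - {l}. G p)"
    using assms(2) by (intro sum.cong) auto
  then show ?thesis using eF eG assms(3) by simp
qed


declare UU_simp[simp del]

lemma crit_apply:
  fixes f g :: "'a::finite \<Rightarrow> real"
  assumes dp: "\<delta> > 0" and F: "\<forall>p. f p = g p + (if p = k then \<delta> else 0) - (if p \<in> S then \<delta> else 0)"
    and S: "\<forall>l\<in>S. g k + 2 * \<delta> < g l"
  shows "leximin_greater f g"
proof (rule crit[of f "g k" g])
  have kS: "k \<notin> S" using S dp by force
  show "\<forall>a. f a < g k \<longleftrightarrow> g a < g k"
  proof
    fix a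
    show "f a < g k \<longleftrightarrow> g a < g k"
    proof (cases "a = k")
      case True then show ?thesis using F kS dp by simp
    next
      case False
      show ?thesis
      proof (cases "a \<in> S")
        case True then show ?thesis using F S False dp by force
      next
        case False2: False
        then show ?thesis using F False by simp
      qed
    qed
  qed
  show "\<forall>a. g a < g k \<longrightarrow> f a = g a"
  proof (intro allI impI)
    fix a assume "g a < g k"
    then have "a \<noteq> k" "a \<notin> S" using S dp by force+
    then show "f a = g a" using F by simp
  qed
  have sub: "{a. f a = g k} \<subseteq> {a. g a = g k} - {k}"
  proof
    fix a assume "a \<in> {a. f a = g k}"
    then have fa: "f a = g k" by simp
    have "a \<noteq> k" using fa F kS dp by auto
    moreover have "a \<notin> S"
    proof
      assume "a \<in> S"
      then have "f a = g a - \<delta>" using F \<open>a \<noteq> k\<close> by simp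
      then show False using fa S \<open>a \<in> S\<close> dp by force
    qed
    ultimately show "a \<in> {a. g a = g k} - {k}" using fa F by simp
  qed
  have "card {a. f a = g k} \<le> card ({a. g a = g k} - {k})" using sub by (intro card_mono) auto
  also have "\<dots> < card {a. g a = g k}" by (rule card_Diff1_less) auto
  finally show "card {a. f a = g k} < card {a. g a = g k}" .
qed

lemma noimp_lex:
  fixes x :: "'b::finite \<Rightarrow> 'j::finite \<Rightarrow> 't::finite \<Rightarrow> real"
  assumes lo: "leximin_optimal v d sp s x"
  shows "\<not> IMP sp s v d x c"
proof
  assume I: "IMP sp s v d x c"
  have fx: "feasible sp s x" using lo leximin_optimal_def by blast
  obtain z \<delta> k where fz: "feasible sp s z" and dp: "\<delta> > 0" and D:
    "(\<forall>p. UU v d z p = UU v d x p + (if p = k then \<delta> else 0)) \<or>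
     (\<exists>l. UU v d x k + 2 * \<delta> < UU v d x l \<and>
        (\<forall>p. UU v d z p = UU v d x p + (if p = k then \<delta> else 0) - (if p = l then \<delta> else 0)))"
    using imp_small[OF fx I] by blast
  have "leximin_greater (UU v d z) (UU v d x)"
  proof (cases "\<forall>p. UU v d z p = UU v d x p + (if p = k then \<delta> else 0)")
    case True
    then show ?thesis using crit_apply[of \<delta> "UU v d z" "UU v d x" k "{}"] dp by simp
  next
    case False
    then obtain l where l: "UU v d x k + 2 * \<delta> < UU v d x l"
      and P: "\<forall>p. UU v d z p = UU v d x p + (if p = k then \<delta> else 0) - (if p = l then \<delta> else 0)"
      using D by blast
    show ?thesis using crit_apply[of \<delta> "UU v d z" "UU v d x" k "{l}"] dp l P by simp
  qed
  then show False using lo fz unfolding leximin_optimal_def UU_def by blast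
qed

lemma pos_lex:
  fixes x :: "'b::finite \<Rightarrow> 'j::finite \<Rightarrow> 't::finite \<Rightarrow> real"
  assumes lo: "leximin_optimal v d sp s x"
    and ex: "\<exists>x. feasible sp s x \<and> (\<forall>i t. util v d x i t > 0)"
  shows "\<forall>i t. util v d x i t > 0"
proof (rule ccontr)
  assume "\<not> (\<forall>i t. util v d x i t > 0)"
  then obtain i t where nt: "util v d x i t \<le> 0" by (auto simp: not_less)
  obtain x0 where f0: "feasible sp s x0" and p0: "\<forall>i t. util v d x0 i t > 0" using ex by blast
  define c where "c = Min (range (UU v d x))"
  have cle: "\<forall>p. c \<le> UU v d x p" using c_def by simp
  have cin: "c \<in> range (UU v d x)" using c_def by (simp add: Min_in)
  have c0: "c \<le> 0" using cle[rule_format, of "(i,t)"] nt by (simp add: UU_simp)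
  have pos0: "\<forall>p. UU v d x0 p > 0" using p0 by (auto simp: UU_def)
  have "leximin_greater (UU v d x0) (UU v d x)"
  proof (rule crit[of _ c])
    show "\<forall>a. UU v d x0 a < c \<longleftrightarrow> UU v d x a < c"
    proof
      fix a
      have "\<not> UU v d x0 a < c" using pos0[rule_format, of a] c0 by (simp del: UU_simp)
      moreover have "\<not> UU v d x a < c" using cle[rule_format, of a] by (simp del: UU_simp)
      ultimately show "UU v d x0 a < c \<longleftrightarrow> UU v d x a < c" by blast
    qed
    show "\<forall>a. UU v d x a < c \<longrightarrow> UU v d x0 a = UU v d x a" using cle by (meson not_le)
    have ne: "\<And>a. UU v d x0 a \<noteq> c"
    proof -
      fix a show "UU v d x0 a \<noteq> c" using pos0[rule_format, of a] c0 by (simp del: UU_simp)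
    qed
    have "{a. UU v d x0 a = c} = {}" using ne by blast
    moreover have "{a. UU v d x a = c} \<noteq> {}"
    proof -
      obtain p where "c = UU v d x p" using cin by blast
      then have "p \<in> {a. UU v d x a = c}" by simp
      then show ?thesis by blast
    qed
    ultimately show "card {a. UU v d x0 a = c} < card {a. UU v d x a = c}"
      by (metis card.empty card_gt_0_iff finite)
  qed
  then show False using lo f0 unfolding leximin_optimal_def UU_def by blast
qed

lemma noimp_mnw:
  fixes x :: "'b::finite \<Rightarrow> 'j::finite \<Rightarrow> 't::finite \<Rightarrow> real"
  assumes mn: "max_nash_welfare v d sp s x"
  shows "\<not> IMP sp s v d x c"
proof
  assume I: "IMP sp s v d x c"
  have fx: "feasible sp s x" and px0: "\<forall>i t. util v d x i t > 0"
    and opt: "\<And>y. feasible sp s y \<Longrightarrow> (\<forall>i t. util v d y i t > 0) \<Longrightarrow> nash_welfare v d y \<le> nash_welfare v d x"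
    using mn unfolding max_nash_welfare_def by blast+
  have px: "\<forall>p. UU v d x p > 0" using px0 by (auto simp: UU_def)
  obtain z \<delta> k where fz: "feasible sp s z" and dp: "\<delta> > 0" and D:
    "(\<forall>p. UU v d z p = UU v d x p + (if p = k then \<delta> else 0)) \<or>
     (\<exists>l. UU v d x k + 2 * \<delta> < UU v d x l \<and>
        (\<forall>p. UU v d z p = UU v d x p + (if p = k then \<delta> else 0) - (if p = l then \<delta> else 0)))"
    using imp_small[OF fx I] by blast
  have "(\<forall>p. UU v d z p > 0) \<and> (\<Sum>p\<in>UNIV. ln (UU v d z p)) > (\<Sum>p\<in>UNIV. ln (UU v d x p))"
  proof (cases "\<forall>p. UU v d z p = UU v d x p + (if p = k then \<delta> else 0)")
    case True
    have ge: "\<forall>p. UU v d x p \<le> UU v d z p" using True dp by (simp add: less_imp_le)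
    have pz: "\<forall>p. UU v d z p > 0" using ge px by (meson less_le_trans)
    have "(\<Sum>p\<in>UNIV. ln (UU v d x p)) < (\<Sum>p\<in>UNIV. ln (UU v d z p))"
    proof (rule sum_strict_mono_ex1)
      show "finite (UNIV :: ('b \<times> 't) set)" by simp
      show "\<forall>p\<in>UNIV. ln (UU v d x p) \<le> ln (UU v d z p)" using ge px pz by simp
      have "UU v d x k < UU v d z k" using True[rule_format, of k] dp by (simp del: UU_simp)
      then show "\<exists>p\<in>UNIV. ln (UU v d x p) < ln (UU v d z p)"
        using px[rule_format, of k] pz[rule_format, of k] by (intro bexI[of _ k]) auto
    qed
    then show ?thesis using pz by simp
  next
    case False
    then obtain l where l: "UU v d x k + 2 * \<delta> < UU v d x l"
      and P: "\<forall>p. UU v d z p = UU v d x p + (if p = k then \<delta> else 0) - (if p = l then \<delta> else 0)"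
      using D by blast
    have kl: "k \<noteq> l" using l dp by force
    have zk: "UU v d z k = UU v d x k + \<delta>" using P[rule_format, of k] kl by simp
    have zl: "UU v d z l = UU v d x l - \<delta>" using P[rule_format, of l] kl by simp
    have xk: "UU v d x k > 0" using px by blast
    have pz: "\<forall>p. UU v d z p > 0"
    proof
      fix p
      show "UU v d z p > 0"
      proof (cases "p = k \<or> p = l")
        case True then show ?thesis using zk zl xk dp l by auto
      next
        case False then show ?thesis using P[rule_format, of p] px[rule_format, of p] by simp
      qed
    qed
    have prod: "UU v d x k * UU v d x l < UU v d z k * UU v d z l"
    proof -
      have "UU v d z k * UU v d z l - UU v d x k * UU v d x l = \<delta> * (UU v d x l - UU v d x k - \<delta>)"
        unfolding zk zl by (simp add: algebra_simps)
      moreover have "\<delta> * (UU v d x l - UU v d x k - \<delta>) > 0" using dp l by simp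
      ultimately show ?thesis by simp
    qed
    have "ln (UU v d x k) + ln (UU v d x l) < ln (UU v d z k) + ln (UU v d z l)"
    proof -
      have a1: "UU v d x k > 0" "UU v d x l > 0" "UU v d z k > 0" "UU v d z l > 0"
        using px pz by blast+
      have "ln (UU v d x k * UU v d x l) < ln (UU v d z k * UU v d z l)"
        using prod a1 by simp
      then show ?thesis using a1 by (simp add: ln_mult)
    qed
    moreover have "\<forall>p. p \<noteq> k \<and> p \<noteq> l \<longrightarrow> ln (UU v d z p) = ln (UU v d x p)"
    proof (intro allI impI)
      fix p assume "p \<noteq> k \<and> p \<noteq> l"
      then show "ln (UU v d z p) = ln (UU v d x p)" using P[rule_format, of p] by simp
    qed
    ultimately have "(\<Sum>p\<in>UNIV. ln (UU v d z p)) > (\<Sum>p\<in>UNIV. ln (UU v d x p))"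
      using two_point[OF kl, of "\<lambda>p. ln (UU v d z p)" "\<lambda>p. ln (UU v d x p)"] by blast
    then show ?thesis using pz by simp
  qed
  then have pz: "\<forall>p. UU v d z p > 0" and gt: "(\<Sum>p\<in>UNIV. ln (UU v d z p)) > (\<Sum>p\<in>UNIV. ln (UU v d x p))"
    by auto
  have pz2: "\<forall>i t. util v d z i t > 0" using pz by (metis UU_simp)
  have cp: "1 / real (card (UNIV :: 't set)) > 0" by (simp add: card_gt_0_iff)
  have "nash_welfare v d z > nash_welfare v d x"
    unfolding nw_pair using gt cp by (intro mult_strict_left_mono) auto
  then show False using opt[OF fz pz2] by simp
qed

theorem corollary1:
  fixes v :: "'b::finite \<Rightarrow> 'j::finite \<Rightarrow> real"
    and d :: "'b \<Rightarrow> 't::finite \<Rightarrow> real"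
    and sp :: "'j \<Rightarrow> 't \<Rightarrow> real"
    and s :: "'j \<Rightarrow> real"
  assumes "\<forall>j t. sp j t \<ge> 0"
    and "\<forall>j. s j \<ge> 0"
    and "\<forall>i j. v i j \<in> {0, 1}"
    and "\<forall>i t. d i t \<ge> 0"
    and "\<exists>x. feasible sp s x \<and> (\<forall>i t. util v d x i t > 0)"
  shows "{x. leximin_optimal v d sp s x} = {x. max_nash_welfare v d sp s x}"
proof (rule Collect_cong)
  fix x :: "'b \<Rightarrow> 'j \<Rightarrow> 't \<Rightarrow> real"
  show "leximin_optimal v d sp s x = max_nash_welfare v d sp s x"
  proof
    assume lo: "leximin_optimal v d sp s x"
    have fx: "feasible sp s x" using lo leximin_optimal_def by blast
    have pos: "\<forall>i t. util v d x i t > 0" using pos_lex[OF lo assms(5)] .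
    have nI: "\<forall>c. \<not> IMP sp s v d x c" using noimp_lex[OF lo] by blast
    show "max_nash_welfare v d sp s x"
      by (rule mnw_from_tight[OF fx pos tight_pair[OF fx assms(3) nI]])
  next
    assume mn: "max_nash_welfare v d sp s x"
    have fx: "feasible sp s x" using mn max_nash_welfare_def by blast
    have nI: "\<forall>c. \<not> IMP sp s v d x c" using noimp_mnw[OF mn] by blast
    show "leximin_optimal v d sp s x"
      by (rule lex_from_tight[OF fx tight_pair[OF fx assms(3) nI]])
  qed
qed

end
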